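(* For every $n\ge 1$, $\min^-_{\omega+1}\not\le_{\mathrm{W}}\operatorname{BWT}_n$.
   Context: Represented spaces: a representation of a set $X$ is a partial surjection $\delta_X:\subseteq\mathbb{N}^\mathbb{N}\to X$. For a partial multi-valued function $f:\subseteq X\rightrightarrows Y$, a realizer is a partial $F:\subseteq\mathbb{N}^\mathbb{N}\to\mathbb{N}^\mathbb{N}$ with $\delta_Y(F(p))\in f(\delta_X(p))$ for all $p$ with $\delta_X(p)\in\mathrm{dom}(f)$. Weihrauch reducibility: $f\le_{\mathrm{W}} g$ iff there are computable partial $H:\subseteq\mathbb{N}^\mathbb{N}\times\mathbb{N}^\mathbb{N}\to\mathbb{N}^\mathbb{N}$ and $K:\subseteq\mathbb{N}^\mathbb{N}\to\mathbb{N}^\mathbb{N}$ such that $p\mapsto H(p,G(K(p)))$ is a realizer of $f$ for every realizer $G$ of $g$. $\omega+1:=\{-2^{-n}:n\in\mathbb{N}\}\cup\{0\}\subseteq\mathbb{R}$, a computable metric space with the Euclidean metric and dense set $\omega+1$ itself; points are represented by the Cauchy representation. Closed subsets of $\omega+1$ are represented negatively ($\mathcal{A}_-(\omega+1)$): a name of a closed $A$ is an enumeration of basic open balls $B(a,q)$ ($a\in\omega+1$, $q$ a nonnegative rational) whose union is $(\omega+1)\setminus A$. $\min^-_{\omega+1}:\subseteq\mathcal{A}_-(\omega+1)\to\omega+1$ maps each nonempty closed $A$ to $\min A$. For $n\ge1$, $\operatorname{BWT}_n:\subseteq\{0,\dots,n-1\}^\mathbb{N}\rightrightarrows\{0,\dots,n-1\}$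 (discrete space $\{0,\dots,n-1\}$) maps a sequence to the set of its cluster points, i.e. the values that occur infinitely often. *)

theory Defs
  imports Complex_Main "HOL-Library.Nat_Bijection"
begin

datatype recf = Zr | Sc | Pj nat | Cn recf "recf list" | Pr recf recf | Mn recf

inductive eval :: "recf \<Rightarrow> nat list \<Rightarrow> nat \<Rightarrow> bool" where
  eval_Zr: "eval Zr xs 0"
| eval_Sc: "eval Sc (x # xs) (Suc x)"
| eval_Pj: "i < length xs \<Longrightarrow> eval (Pj i) xs (xs ! i)"
| eval_Cn: "list_all2 (\<lambda>g y. eval g xs y) gs ys \<Longrightarrow> eval f ys z \<Longrightarrow> eval (Cn f gs) xs z"
| eval_Pr0: "eval f xs z \<Longrightarrow> eval (Pr f g) (0 # xs) z"
| eval_PrS: "eval (Pr f g) (n # xs) y \<Longrightarrow> eval g (y # n # xs) z \<Longrightarrow> eval (Pr f g) (Suc n # xs) z"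
| eval_Mn: "eval f (n # xs) 0 \<Longrightarrow> (\<forall>m<n. \<exists>y. eval f (m # xs) (Suc y)) \<Longrightarrow> eval (Mn f) xs n"

type_synonym baire = "nat \<Rightarrow> nat"

definition prefix_code :: "baire \<Rightarrow> nat \<Rightarrow> nat" where
  "prefix_code p k = list_encode (map p [0..<k])"

text \<open>A partial
  F :\<subseteq> baire \<rightarrow> baire is computable iff some e computes F p from p for all p in dom F.\<close>
definition computes :: "recf \<Rightarrow> baire \<Rightarrow> baire \<Rightarrow> bool" where
  "computes e p q \<longleftrightarrow>
     (\<forall>n. (\<exists>k. eval e [n, prefix_code p k] (q n)) \<and>
          (\<forall>k v. eval e [n, prefix_code p k] v \<longrightarrow> v = q n))"

definition pair_baire :: "baire \<Rightarrow> baire \<Rightarrow> baire" where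
  "pair_baire p q = (\<lambda>i. if even i then p (i div 2) else q (i div 2))"

text \<open>A representation is a partial map baire \<rightharpoonup> X (given as an option-valued function);
  a partial multi-valued function f :\<subseteq> X \<rightrightarrows> Y is given by f :: X \<Rightarrow> Y set with
  dom f = {x. f x \<noteq> {}}; realizers are partial maps baire \<rightharpoonup> baire.\<close>
definition realizer ::
  "(baire \<Rightarrow> 'a option) \<Rightarrow> (baire \<Rightarrow> 'b option) \<Rightarrow> ('a \<Rightarrow> 'b set) \<Rightarrow> (baire \<Rightarrow> baire option) \<Rightarrow> bool" where
  "realizer dX dY f F \<longleftrightarrow>
     (\<forall>p x. dX p = Some x \<and> f x \<noteq> {} \<longrightarrow> (\<exists>q y. F p = Some q \<and> dY q = Some y \<and> y \<in> f x))"

definition weihrauch_le ::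
  "(baire \<Rightarrow> 'a option) \<Rightarrow> (baire \<Rightarrow> 'b option) \<Rightarrow> ('a \<Rightarrow> 'b set) \<Rightarrow>
   (baire \<Rightarrow> 'c option) \<Rightarrow> (baire \<Rightarrow> 'd option) \<Rightarrow> ('c \<Rightarrow> 'd set) \<Rightarrow> bool" where
  "weihrauch_le dX dY f dU dV g \<longleftrightarrow>
     (\<exists>eH eK. \<forall>G. realizer dU dV g G \<longrightarrow>
        (\<forall>p x. dX p = Some x \<and> f x \<noteq> {} \<longrightarrow>
           (\<exists>q r s y. computes eK p q \<and> G q = Some r \<and> computes eH (pair_baire p r) s
                      \<and> dY s = Some y \<and> y \<in> f x)))"

definition omega1 :: "real set" where
  "omega1 = {- ((1/2) ^ n) | n. True} \<union> {0}"

text \<open>Numbering of the dense set omega+1 (= omega+1 itself).\<close>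
fun omega1_num :: "nat \<Rightarrow> real" where
  "omega1_num 0 = 0"
| "omega1_num (Suc n) = - ((1/2) ^ n)"

definition cauchy_rep :: "baire \<Rightarrow> real option" where
  "cauchy_rep p = (if (\<forall>i j. i \<le> j \<longrightarrow> \<bar>omega1_num (p i) - omega1_num (p j)\<bar> \<le> (1/2) ^ i)
                   then Some (lim (\<lambda>i. omega1_num (p i))) else None)"

definition radius_num :: "nat \<Rightarrow> real" where
  "radius_num k = (case prod_decode k of (a, b) \<Rightarrow> real a / real (Suc b))"

definition ball_code :: "nat \<Rightarrow> real set" where
  "ball_code k = (case prod_decode k of (a, r) \<Rightarrow>
      {x \<in> omega1. \<bar>x - omega1_num a\<bar> < radius_num r})"

definition closed_neg_rep :: "baire \<Rightarrow> real set option" where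
  "closed_neg_rep p = Some (omega1 - (\<Union>i. ball_code (p i)))"

text \<open>min^-_{omega+1}: defined exactly on nonempty closed sets, maps A to min A.\<close>
definition min_omega1 :: "real set \<Rightarrow> real set" where
  "min_omega1 A = {x. x \<in> A \<and> (\<forall>y\<in>A. x \<le> y)}"

definition seq_rep :: "nat \<Rightarrow> baire \<Rightarrow> baire option" where
  "seq_rep n p = (if \<forall>i. p i < n then Some p else None)"

definition fin_rep :: "nat \<Rightarrow> baire \<Rightarrow> nat option" where
  "fin_rep n q = (if q 0 < n then Some (q 0) else None)"

definition BWT :: "nat \<Rightarrow> baire \<Rightarrow> nat set" where
  "BWT n s = {k. k < n \<and> infinite {i. s i = k}}"

end

theory Submission
  imports Defs
begin

definition rk :: "nat \<Rightarrow> baire" where "rk k = (\<lambda>i. k)"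
definition rmc :: "nat \<Rightarrow> nat" where
  "rmc j = prod_encode (Suc j, prod_encode (1, 2^(j+2) - 1))"
definition At :: "nat \<Rightarrow> real set" where
  "At t = omega1 - {- ((1/2)^j) | j. j < t}"

lemma sep_pow:
  assumes "i \<noteq> j"
  shows "(1/2::real)^(Suc j) \<le> \<bar>(1/2)^i - (1/2)^j\<bar>"
proof (cases "i < j")
  case True
  then have h: "(1/2::real)^j \<le> (1/2)^(Suc i)" by (intro power_decreasing) auto
  have p: "(0::real) < (1/2)^j" by simp
  have h': "(1/2::real)^j * 2 \<le> (1/2)^i" using h by simp
  have "0 \<le> (1/2::real)^i - (1/2)^j" using h' p by linarith
  then have eq: "\<bar>(1/2::real)^i - (1/2)^j\<bar> = (1/2)^i - (1/2)^j" by (rule abs_of_nonneg)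
  show ?thesis unfolding eq power_Suc using h' p by linarith
next
  case False
  then have "j < i" using assms by simp
  then have h: "(1/2::real)^i \<le> (1/2)^(Suc j)" by (intro power_decreasing) auto
  have p: "(0::real) < (1/2)^i" by simp
  have h': "(1/2::real)^i * 2 \<le> (1/2)^j" using h by simp
  have "(1/2::real)^i - (1/2)^j \<le> 0" using h' p by linarith
  then have eq: "\<bar>(1/2::real)^i - (1/2)^j\<bar> = (1/2)^j - (1/2)^i" by simp
  show ?thesis unfolding eq power_Suc using h' p by linarith
qed

lemma sep_omega1:
  assumes "x \<in> omega1" "x \<noteq> - ((1/2)^j)"
  shows "(1/2::real)^(Suc j) \<le> \<bar>x + (1/2)^j\<bar>"
proof -
  from assms(1) consider (a) i where "x = - ((1/2)^i)" | (b) "x = 0"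
    unfolding omega1_def by auto
  then show ?thesis
  proof cases
    case a
    then have "i \<noteq> j" using assms by auto
    from sep_pow[OF this] a show ?thesis by (simp add: abs_minus_commute)
  next
    case b
    then show ?thesis by simp
  qed
qed

lemma ball0: "ball_code 0 = {}"
proof -
  have "prod_decode 0 = (0,0)" using prod_encode_inverse[of "(0,0)"] by (simp add: prod_encode_def)
  then show ?thesis by (simp add: ball_code_def radius_num_def)
qed

lemma ball_rm: "ball_code (rmc j) = {- ((1/2)^j)}"
proof -
  have r: "radius_num (prod_encode (1, 2^(j+2) - 1)) = (1/2)^(j+2)"
  proof -
    have "Suc (2^(j+2) - 1) = (2::nat)^(j+2)" by simp
    then have "real (Suc (2^(j+2) - 1)) = 2^(j+2)" by (metis of_nat_numeral of_nat_power)
    then show ?thesis by (simp add: radius_num_def power_one_over)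
  qed
  have bc: "ball_code (rmc j) = {x \<in> omega1. \<bar>x - omega1_num (Suc j)\<bar> < (1/2)^(j+2)}"
    by (simp only: ball_code_def rmc_def prod_encode_inverse prod.case r)
  have m: "- ((1/2::real)^j) \<in> omega1" unfolding omega1_def by auto
  show ?thesis
  proof (rule set_eqI, rule iffI)
    fix x assume "x \<in> ball_code (rmc j)"
    then have x: "x \<in> omega1" "\<bar>x + (1/2)^j\<bar> < (1/2)^(j+2)"
      by (auto simp: bc)
    show "x \<in> {- ((1/2)^j)}"
    proof (rule ccontr)
      assume "x \<notin> {- ((1/2)^j)}"
      then have "(1/2::real)^(Suc j) \<le> \<bar>x + (1/2)^j\<bar>" using sep_omega1 x by auto
      moreover have "(1/2::real)^(j+2) \<le> (1/2)^(Suc j)" by (intro power_decreasing) auto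
      ultimately show False using x by linarith
    qed
  next
    fix x assume "x \<in> {- ((1/2::real)^j)}"
    then show "x \<in> ball_code (rmc j)" using m by (auto simp: bc)
  qed
qed

definition Inv :: "baire \<Rightarrow> nat \<Rightarrow> nat \<Rightarrow> bool" where
  "Inv P m t \<longleftrightarrow> (\<forall>i. P i = 0 \<or> (\<exists>j<t. P i = rmc j)) \<and> (\<forall>j<t. \<exists>i<m. P i = rmc j)"

lemma Inv_rep:
  assumes "Inv P m t"
  shows "closed_neg_rep P = Some (At t)"
proof -
  have "(\<Union>i. ball_code (P i)) = {- ((1/2)^j) | j. j < t}"
  proof
    show "(\<Union>i. ball_code (P i)) \<subseteq> {- ((1/2)^j) | j. j < t}"
    proof
      fix x assume "x \<in> (\<Union>i. ball_code (P i))"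
      then obtain i where i: "x \<in> ball_code (P i)" by auto
      from assms have "P i = 0 \<or> (\<exists>j<t. P i = rmc j)" by (auto simp: Inv_def)
      then show "x \<in> {- ((1/2)^j) | j. j < t}" using i ball0 ball_rm by auto
    qed
  next
    show "{- ((1/2)^j) | j. j < t} \<subseteq> (\<Union>i. ball_code (P i))"
    proof
      fix x :: real assume "x \<in> {- ((1/2)^j) | j. j < t}"
      then obtain j where j: "j < t" "x = - ((1/2)^j)" by auto
      then obtain i where "P i = rmc j" using assms by (auto simp: Inv_def)
      then show "x \<in> (\<Union>i. ball_code (P i))" using j ball_rm by (metis UNIV_I UN_iff singletonI)
    qed
  qed
  then show ?thesis by (simp add: closed_neg_rep_def At_def)
qed

lemma min_At: "min_omega1 (At t) = {- ((1/2)^t)}"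
proof -
  have mem: "- ((1/2::real)^t) \<in> At t"
  proof -
    have "(1/2::real)^t \<noteq> (1/2)^j" if "j < t" for j
      using sep_pow[of t j] that by auto
    then show ?thesis unfolding At_def omega1_def by auto
  qed
  have le: "- ((1/2::real)^t) \<le> y" if "y \<in> At t" for y
  proof -
    from that consider (a) i where "y = - ((1/2)^i)" "\<not> i < t" | (b) "y = 0"
      unfolding At_def omega1_def by auto
    then show ?thesis
    proof cases
      case a
      then have "(1/2::real)^i \<le> (1/2)^t" by (intro power_decreasing) auto
      then show ?thesis using a by simp
    qed simp
  qed
  show ?thesis unfolding min_omega1_def using mem le by (auto intro: antisym)
qed

lemma cauchy_bound:
  assumes "cauchy_rep s = Some y"
  shows "\<bar>omega1_num (s i) - y\<bar> \<le> (1/2)^i"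
proof -
  define a where "a = (\<lambda>i. omega1_num (s i))"
  have C: "\<forall>i j. i \<le> j \<longrightarrow> \<bar>a i - a j\<bar> \<le> (1/2)^i" and y: "y = lim a"
    using assms by (auto simp: cauchy_rep_def a_def split: if_splits)
  have "Cauchy a"
  proof (rule metric_CauchyI)
    fix e :: real assume e: "0 < e"
    obtain M where M: "(1/2::real)^M < e" using real_arch_pow_inv[of e "1/2"] e by auto
    show "\<exists>M. \<forall>m\<ge>M. \<forall>n\<ge>M. dist (a m) (a n) < e"
    proof (intro exI allI impI)
      fix m n' assume mn: "M \<le> m" "M \<le> n'"
      have "dist (a m) (a n') \<le> (1/2)^(min m n')"
      proof (cases "m \<le> n'")
        case True
        then show ?thesis using C by (auto simp: dist_real_def min_def)
      next
        case False
        then have "\<bar>a n' - a m\<bar> \<le> (1/2)^n'" using C by auto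
        then show ?thesis using False by (simp add: dist_real_def min_def abs_minus_commute)
      qed
      also have "\<dots> \<le> (1/2)^M" using mn by (intro power_decreasing) auto
      finally show "dist (a m) (a n') < e" using M by linarith
    qed
  qed
  then have "a \<longlonglongrightarrow> y" using y by (simp add: Cauchy_convergent_iff convergent_LIMSEQ_iff)
  then have "(\<lambda>j. \<bar>a i - a j\<bar>) \<longlonglongrightarrow> \<bar>a i - y\<bar>" by (intro tendsto_intros)
  moreover have "eventually (\<lambda>j. \<bar>a i - a j\<bar> \<le> (1/2)^i) sequentially"
    using C by (auto simp: eventually_sequentially)
  ultimately have "\<bar>a i - y\<bar> \<le> (1/2)^i" by (rule tendsto_upperbound) simp
  then show ?thesis by (simp add: a_def)
qed

lemma computes_val: "computes e p q \<Longrightarrow> eval e [n, prefix_code p k] v \<Longrightarrow> v = q n"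
  unfolding computes_def by blast

lemma computes_ex: "computes e p q \<Longrightarrow> \<exists>k. eval e [n, prefix_code p k] (q n)"
  unfolding computes_def by blast

lemma computes_unique: "computes e p q \<Longrightarrow> computes e p q' \<Longrightarrow> q = q'"
proof
  fix n assume a: "computes e p q" "computes e p q'"
  obtain k where "eval e [n, prefix_code p k] (q' n)" using computes_ex[OF a(2)] by blast
  then show "q n = q' n" using computes_val[OF a(1)] by simp
qed

lemma prefix_agree:
  assumes "\<forall>i<m. P' i = P i" "L \<le> m"
  shows "prefix_code (pair_baire P' r) L = prefix_code (pair_baire P r) L"
  unfolding prefix_code_def
proof (rule arg_cong[where f=list_encode], rule map_cong[OF refl])
  fix i assume "i \<in> set [0..<L]"
  then have "i div 2 < m" using assms(2) by auto
  then show "pair_baire P' r i = pair_baire P r i" using assms(1) by (simp add: pair_baire_def)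
qed

lemma pigeon:
  assumes "\<forall>i. q i < n"
  shows "BWT n q \<noteq> {}"
proof
  assume "BWT n q = {}"
  then have f: "\<forall>k<n. finite {i. q i = k}" by (auto simp: BWT_def)
  have "(UNIV::nat set) = (\<Union>k<n. {i. q i = k})" using assms by auto
  also have "finite \<dots>" using f by auto
  finally show False by simp
qed

definition Dead :: "recf \<Rightarrow> baire \<Rightarrow> nat \<Rightarrow> nat \<Rightarrow> nat set \<Rightarrow> bool" where
  "Dead eH P m t D \<longleftrightarrow> (\<forall>k\<in>D. \<exists>j L v. j < t \<and> L \<le> m \<and>
      eval eH [j+3, prefix_code (pair_baire P (rk k)) L] v \<and>
      \<bar>omega1_num v + (1/2)^j\<bar> \<le> (1/2)^(j+3))"

lemma dead_fail:
  assumes "Dead eH P m t D" "k \<in> D" "computes eH (pair_baire P (rk k)) s"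
    "cauchy_rep s = Some y" "y \<in> min_omega1 (At t)"
  shows False
proof -
  obtain j L v where j: "j < t" "eval eH [j+3, prefix_code (pair_baire P (rk k)) L] v"
     "\<bar>omega1_num v + (1/2)^j\<bar> \<le> (1/2)^(j+3)"
    using assms(1,2) unfolding Dead_def by blast
  have v: "v = s (j+3)" using computes_val[OF assms(3) j(2)] .
  have y: "y = - ((1/2)^t)" using assms(5) min_At by auto
  have b: "\<bar>omega1_num v - y\<bar> \<le> (1/2)^(j+3)" using cauchy_bound[OF assms(4)] v by simp
  have "(1/2::real)^(Suc j) \<le> \<bar>(1/2)^t - (1/2)^j\<bar>" using sep_pow[of t j] j(1) by simp
  moreover have "(1/2::real)^(j+3) = (1/2)^j / 8" by (simp add: power_add power_numeral_reduce)
  moreover have "(1/2::real)^(Suc j) = (1/2)^j / 2" by simp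
  moreover have "\<bar>(1/2::real)^t - (1/2)^j\<bar> \<le> \<bar>omega1_num v - y\<bar> + \<bar>omega1_num v + (1/2)^j\<bar>"
    using y by (smt (verit))
  moreover have "(0::real) < (1/2)^j" by simp
  ultimately show False using b j(3) by linarith
qed

definition Done :: "recf \<Rightarrow> recf \<Rightarrow> nat \<Rightarrow> bool" where
  "Done eH eK n \<longleftrightarrow> (\<exists>P A k. closed_neg_rep P = Some A \<and> min_omega1 A \<noteq> {} \<and>
     (\<forall>q. computes eK P q \<longrightarrow> \<not> (\<forall>i. q i < n) \<or>
        (k \<in> BWT n q \<and> \<not> (\<exists>s y. computes eH (pair_baire P (rk k)) s \<and> cauchy_rep s = Some y
                                \<and> y \<in> min_omega1 A))))"

lemma step:
  assumes nd: "\<not> Done eH eK n"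
    and I: "Inv P m t" and Dd: "Dead eH P m t D" and cD: "card D = t" and sD: "D \<subseteq> {..<n}"
  shows "\<exists>P' m' D'. Inv P' m' (Suc t) \<and> Dead eH P' m' (Suc t) D' \<and> card D' = Suc t \<and> D' \<subseteq> {..<n}"
proof -
  have rep: "closed_neg_rep P = Some (At t)" using Inv_rep[OF I] .
  have mne: "min_omega1 (At t) \<noteq> {}" using min_At by simp
  have nd': "\<And>k. \<exists>q. computes eK P q \<and> (\<forall>i. q i < n) \<and> (k \<in> BWT n q \<longrightarrow>
      (\<exists>s y. computes eH (pair_baire P (rk k)) s \<and> cauchy_rep s = Some y \<and> y \<in> min_omega1 (At t)))"
    using nd rep mne unfolding Done_def by blast
  obtain q where q: "computes eK P q" "\<forall>i. q i < n" using nd'[of 0] by blast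
  have H: "\<exists>s y. computes eH (pair_baire P (rk k)) s \<and> cauchy_rep s = Some y \<and> y \<in> min_omega1 (At t)"
    if "k \<in> BWT n q" for k
  proof -
    obtain q' where q': "computes eK P q'" "k \<in> BWT n q' \<longrightarrow>
      (\<exists>s y. computes eH (pair_baire P (rk k)) s \<and> cauchy_rep s = Some y \<and> y \<in> min_omega1 (At t))"
      using nd'[of k] by blast
    have "q' = q" using computes_unique[OF q'(1) q(1)] .
    then show ?thesis using q'(2) that by simp
  qed
  have "\<not> BWT n q \<subseteq> D"
  proof
    assume sub: "BWT n q \<subseteq> D"
    obtain k where k: "k \<in> BWT n q" using pigeon[OF q(2)] by blast
    obtain s y where "computes eH (pair_baire P (rk k)) s" "cauchy_rep s = Some y" "y \<in> min_omega1 (At t)"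
      using H[OF k] by blast
    then show False using dead_fail[OF Dd] k sub by blast
  qed
  then obtain k where k: "k \<in> BWT n q" "k \<notin> D" by blast
  obtain s y where s: "computes eH (pair_baire P (rk k)) s" "cauchy_rep s = Some y" "y \<in> min_omega1 (At t)"
    using H[OF k(1)] by blast
  have y: "y = - ((1/2)^t)" using s(3) min_At by auto
  have b: "\<bar>omega1_num (s (t+3)) + (1/2)^t\<bar> \<le> (1/2)^(t+3)"
    using cauchy_bound[OF s(2), of "t+3"] y by simp
  obtain L where L: "eval eH [t+3, prefix_code (pair_baire P (rk k)) L] (s (t+3))"
    using computes_ex[OF s(1)] by blast
  define m' where "m' = max m L"
  define P' where "P' = P(m' := rmc t)"
  have agree: "\<forall>i<m'. P' i = P i" by (simp add: P'_def)
  have I': "Inv P' (Suc m') (Suc t)"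
    unfolding Inv_def
  proof (intro conjI allI impI)
    fix i show "P' i = 0 \<or> (\<exists>j<Suc t. P' i = rmc j)"
      using I unfolding Inv_def P'_def by (cases "i = m'") (auto, meson less_SucI)
  next
    fix j assume j: "j < Suc t"
    show "\<exists>i<Suc m'. P' i = rmc j"
    proof (cases "j = t")
      case True then show ?thesis by (intro exI[of _ m']) (simp add: P'_def)
    next
      case False
      then have "j < t" using j by simp
      then obtain i where "i < m" "P i = rmc j" using I unfolding Inv_def by blast
      moreover have "m \<le> m'" by (simp add: m'_def)
      ultimately show ?thesis using agree by (intro exI[of _ i]) auto
    qed
  qed
  have D': "Dead eH P' (Suc m') (Suc t) (insert k D)"
    unfolding Dead_def
  proof
    fix k' assume "k' \<in> insert k D"
    then consider "k' = k" | "k' \<in> D" by blast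
    then show "\<exists>j L v. j < Suc t \<and> L \<le> Suc m' \<and>
      eval eH [j+3, prefix_code (pair_baire P' (rk k')) L] v \<and>
      \<bar>omega1_num v + (1/2)^j\<bar> \<le> (1/2)^(j+3)"
    proof cases
      case 1
      have "L \<le> m'" by (simp add: m'_def)
      then have "prefix_code (pair_baire P' (rk k)) L = prefix_code (pair_baire P (rk k)) L"
        using prefix_agree[OF agree] by blast
      then show ?thesis using 1 L b \<open>L \<le> m'\<close>
        by (intro exI[of _ t] exI[of _ L] exI[of _ "s (t+3)"]) auto
    next
      case 2
      then obtain j L' v where jv: "j < t" "L' \<le> m" "eval eH [j+3, prefix_code (pair_baire P (rk k')) L'] v"
        "\<bar>omega1_num v + (1/2)^j\<bar> \<le> (1/2)^(j+3)" using Dd unfolding Dead_def by blast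
      have "L' \<le> m'" using jv(2) by (simp add: m'_def)
      then have "prefix_code (pair_baire P' (rk k')) L' = prefix_code (pair_baire P (rk k')) L'"
        using prefix_agree[OF agree] by blast
      then show ?thesis using jv \<open>L' \<le> m'\<close>
        by (intro exI[of _ j] exI[of _ L'] exI[of _ v]) auto
    qed
  qed
  have fD: "finite D" using sD finite_subset by blast
  have "card (insert k D) = Suc t" using fD k(2) cD by simp
  moreover have "insert k D \<subseteq> {..<n}" using sD k(1) by (auto simp: BWT_def)
  ultimately show ?thesis using I' D' by blast
qed

lemma main: "Done eH eK n"
proof (rule ccontr)
  assume nd: "\<not> Done eH eK n"
  have "\<exists>P m D. Inv P m t \<and> Dead eH P m t D \<and> card D = t \<and> D \<subseteq> {..<n}" for t
  proof (induction t)
    case 0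
    have "Inv (\<lambda>_. 0) 0 0" by (simp add: Inv_def)
    moreover have "Dead eH (\<lambda>_. 0) 0 0 {}" by (simp add: Dead_def)
    ultimately show ?case by fastforce
  next
    case (Suc t)
    then show ?case using step[OF nd] by blast
  qed
  then obtain P m D where "card D = Suc n" "D \<subseteq> {..<n}" by blast
  then show False using card_mono[of "{..<n}" D] by simp
qed

theorem proposition3p4:
  fixes n :: nat
  assumes "n \<ge> 1"
  shows "\<not> weihrauch_le closed_neg_rep cauchy_rep min_omega1 (seq_rep n) (fin_rep n) (BWT n)"
proof
  assume "weihrauch_le closed_neg_rep cauchy_rep min_omega1 (seq_rep n) (fin_rep n) (BWT n)"
  then obtain eH eK where W: "\<And>G. realizer (seq_rep n) (fin_rep n) (BWT n) G \<Longrightarrow>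
        (\<forall>p x. closed_neg_rep p = Some x \<and> min_omega1 x \<noteq> {} \<longrightarrow>
           (\<exists>q r s y. computes eK p q \<and> G q = Some r \<and> computes eH (pair_baire p r) s
                      \<and> cauchy_rep s = Some y \<and> y \<in> min_omega1 x))"
    unfolding weihrauch_le_def by blast
  obtain P A k where PA: "closed_neg_rep P = Some A" "min_omega1 A \<noteq> {}"
    and D: "\<forall>q. computes eK P q \<longrightarrow> \<not> (\<forall>i. q i < n) \<or>
        (k \<in> BWT n q \<and> \<not> (\<exists>s y. computes eH (pair_baire P (rk k)) s \<and> cauchy_rep s = Some y
                                \<and> y \<in> min_omega1 A))"
    using main[of eH eK n] unfolding Done_def by blast
  define ch where "ch = (\<lambda>q. if k \<in> BWT n q then k else (SOME k'. k' \<in> BWT n q))"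
  define G where "G = (\<lambda>q. if \<forall>i. q i < n then Some (rk (ch q)) else None)"
  have chB: "BWT n q \<noteq> {} \<Longrightarrow> ch q \<in> BWT n q" for q
    unfolding ch_def by (auto intro: someI_ex)
  have R: "realizer (seq_rep n) (fin_rep n) (BWT n) G"
    unfolding realizer_def
  proof (intro allI impI)
    fix p x assume a: "seq_rep n p = Some x \<and> BWT n x \<noteq> {}"
    then have v: "\<forall>i. p i < n" "x = p" by (auto simp: seq_rep_def split: if_splits)
    have c: "ch p \<in> BWT n p" using chB a v by simp
    then have "ch p < n" by (simp add: BWT_def)
    then show "\<exists>q y. G p = Some q \<and> fin_rep n q = Some y \<and> y \<in> BWT n x"
      using v c by (auto simp: G_def fin_rep_def rk_def)
  qed
  obtain q r s y where qr: "computes eK P q" "G q = Some r" "computes eH (pair_baire P r) s"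
    "cauchy_rep s = Some y" "y \<in> min_omega1 A"
    using W[OF R] PA by blast
  from D qr(1) have "\<not> (\<forall>i. q i < n) \<or> (k \<in> BWT n q \<and> \<not> (\<exists>s y. computes eH (pair_baire P (rk k)) s \<and> cauchy_rep s = Some y
                                \<and> y \<in> min_omega1 A))" by blast
  then show False
  proof (elim disjE)
    assume "\<not> (\<forall>i. q i < n)" then show False using qr(2) by (auto simp: G_def split: if_splits)
  next
    assume h: "k \<in> BWT n q \<and> \<not> (\<exists>s y. computes eH (pair_baire P (rk k)) s \<and> cauchy_rep s = Some y
                                \<and> y \<in> min_omega1 A)"
    then have "r = rk k" using qr(2) by (auto simp: G_def ch_def split: if_splits)
    then show False using h qr by blast
  qed
qed

end
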